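(* Let $h:\{0,1,2,3\}^*\to\{0,1,2,3\}^*$ be the $11$-uniform morphism defined by $h(0)=01312021310$, $h(1)=12023132021$, $h(2)=23130203132$, $h(3)=30201310203$. Then every letter image $h(a)$ is a palindrome, and the infinite fixed point $h^\omega(0)=\lim_{n\to\infty}h^n(0)$ contains no factor that is a $(p/q)$-power with $p/q>\tfrac32$. Consequently, for every $n\ge1$, $h^n(0)$ is a palindrome of length $11^n$ with critical exponent $\tfrac32$.
   Context: A word $x=x[1..n]$ has period $q$ if $x[i]=x[i+q]$ for $1\le i\le n-q$. For integers $p>q\ge1$, $x$ is a $(p/q)$-power if it has length $p$ and period $q$. The critical exponent of a word is the maximum, over its nonempty factors $w'$, of the largest $p/q$ such that $w'$ is a $(p/q)$-power. Since $h(0)$ begins with $0$, the words $h^n(0)$ are prefixes of one another and define the infinite fixed point $h^\omega(0)$. *)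

theory Defs
  imports Complex_Main "HOL-Library.Sublist"
begin

fun h_letter :: "nat \<Rightarrow> nat list" where
  "h_letter a =
     (if a = 0 then [0,1,3,1,2,0,2,1,3,1,0]
      else if a = 1 then [1,2,0,2,3,1,3,2,0,2,1]
      else if a = 2 then [2,3,1,3,0,2,0,3,1,3,2]
      else if a = 3 then [3,0,2,0,1,3,1,0,2,0,3]
      else [])"

definition h :: "nat list \<Rightarrow> nat list" where
  "h w = concat (map h_letter w)"

definition hpow :: "nat \<Rightarrow> nat list" where
  "hpow n = (h ^^ n) [0]"

text \<open>The infinite fixed point h^omega(0): position i is read off from the prefix
  h^(i+1)(0), which has length 11^(i+1) > i (the words h^n(0) are prefixes of one another).\<close>
definition h_omega :: "nat \<Rightarrow> nat" where
  "h_omega i = hpow (Suc i) ! i"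

definition has_period :: "'a list \<Rightarrow> nat \<Rightarrow> bool" where
  "has_period x q \<longleftrightarrow> (\<forall>j. j + q < length x \<longrightarrow> x ! j = x ! (j + q))"

definition is_power :: "'a list \<Rightarrow> nat \<Rightarrow> nat \<Rightarrow> bool" where
  "is_power x p q \<longleftrightarrow> p > q \<and> q \<ge> 1 \<and> length x = p \<and> has_period x q"

definition crit_exp :: "'a list \<Rightarrow> real" where
  "crit_exp w = Max {real p / real q | v p q. sublist v w \<and> v \<noteq> [] \<and> is_power v p q}"

end

theory Submission
  imports Defs
begin

definition cc :: "nat list" where "cc = [0,1,3,1,2,0,2,1,3,1,0]"

fun W :: "nat \<Rightarrow> nat" where
  "W n = (if n = 0 then 0 else (W (n div 11) + cc ! (n mod 11)) mod 4)"
declare W.simps[simp del]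

definition Dk :: "nat \<Rightarrow> nat" where "Dk k = (cc!(k+1) + 4 - cc!k) mod 4"

definition H :: "nat \<Rightarrow> nat \<Rightarrow> nat \<Rightarrow> nat" where
  "H d1 d2 n = (if n < 11 then 0 else if n < 22 then d1 else d1 + d2) + cc ! (n mod 11)"

lemma F1c: "list_all (\<lambda>r0. list_all (\<lambda>s. list_ex (\<lambda>t. (r0+t) mod 11 \<noteq> 10 \<and> (r0+t+s) mod 11 \<noteq> 10 \<and> Dk ((r0+t) mod 11) \<noteq> Dk ((r0+t+s) mod 11)) [0..<5]) [1..<11]) [0..<11]"
  by code_simp

lemma F2c: "list_all (\<lambda>x. list_all (\<lambda>y. list_all (\<lambda>k. list_all (\<lambda>k'. (x + cc!k) mod 4 = (y+cc!k') mod 4 \<and> (x + cc!(k+1)) mod 4 = (y + cc!(k'+1)) mod 4 \<longrightarrow> Dk k = Dk k') [0..<10]) [0..<10]) [0..<4]) [0..<4]"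
  by code_simp

lemma F4c: "list_all (\<lambda>x. list_all (\<lambda>k. (x+cc!(k+1)) mod 4 \<noteq> (x + cc!k) mod 4) [0..<10]) [0..<4]"
  by code_simp

lemma F5c: "list_all (\<lambda>k. cc!(10-k) = cc!k) [0..<11]"
  by code_simp

lemma F3c: "list_all (\<lambda>d1. list_all (\<lambda>d2. list_all (\<lambda>r. list_all (\<lambda>q. list_ex (\<lambda>t. H d1 d2 (r+t) mod 4 \<noteq> H d1 d2 (r+t+q) mod 4) [0..<q div 2+1]) [1..<10]) [0..<11]) [1,2,3]) [1,2,3]"
  by code_simp

lemma F1: "r0 < 11 \<Longrightarrow> 1 \<le> s \<Longrightarrow> s < 11 \<Longrightarrow> \<exists>t<5. (r0+t) mod 11 \<noteq> 10 \<and> (r0+t+s) mod 11 \<noteq> 10 \<and> Dk ((r0+t) mod 11) \<noteq> Dk ((r0+t+s) mod 11)"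
  using F1c unfolding list_all_iff list_ex_iff set_upt by (meson atLeastLessThan_iff zero_le)

lemma F2: "x < 4 \<Longrightarrow> y < 4 \<Longrightarrow> k < 10 \<Longrightarrow> k' < 10 \<Longrightarrow> (x + cc!k) mod 4 = (y+cc!k') mod 4 \<Longrightarrow> (x + cc!(k+1)) mod 4 = (y + cc!(k'+1)) mod 4 \<Longrightarrow> Dk k = Dk k'"
  using F2c unfolding list_all_iff set_upt by (meson atLeastLessThan_iff zero_le)

lemma F4: "x < 4 \<Longrightarrow> k < 10 \<Longrightarrow> (x+cc!(k+1)) mod 4 \<noteq> (x + cc!k) mod 4"
  using F4c unfolding list_all_iff set_upt by (meson atLeastLessThan_iff zero_le)

lemma F5: "k < 11 \<Longrightarrow> cc!(10-k) = cc!k"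
  using F5c unfolding list_all_iff set_upt by (meson atLeastLessThan_iff zero_le)

lemma F3: assumes "d1 \<in> {1,2,3}" "d2 \<in> {1,2,3}" "r < 11" "1 \<le> q" "q \<le> 9" shows
   "\<exists>t < q div 2 + 1. H d1 d2 (r+t) mod 4 \<noteq> H d1 d2 (r+t+q) mod 4"
proof -
  have "r \<in> {0..<11}" "q \<in> {1..<10}" using assms by auto
  moreover have "d1 \<in> set [1,2,3]" "d2 \<in> set [1,2,3]" using assms by auto
  ultimately show ?thesis using F3c unfolding list_all_iff list_ex_iff set_upt
    by (metis (no_types, lifting) atLeastLessThan_iff zero_le)
qed


lemma W_lt: "W n < 4"
  by (subst W.simps) simp

lemma W0: "W 0 = 0"
  by (subst W.simps) simp

lemma W_step: assumes "k < 11" shows "W (11*b+k) = (W b + cc!k) mod 4"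
proof (cases "11*b+k = 0")
  case True then have "b=0" "k=0" by auto
  then show ?thesis by (simp add: W0 cc_def)
next
  case False
  have "(11*b+k) div 11 = b" "(11*b+k) mod 11 = k" using assms by auto
  have "W (11*b+k) = (if 11*b+k = 0 then 0 else (W ((11*b+k) div 11) + cc ! ((11*b+k) mod 11)) mod 4)"
    by (rule W.simps)
  also have "\<dots> = (W ((11*b+k) div 11) + cc ! ((11*b+k) mod 11)) mod 4"
    by (rule if_not_P[OF False])
  finally show ?thesis using \<open>(11*b+k) div 11 = b\<close> \<open>(11*b+k) mod 11 = k\<close> by simp
qed

lemma canc: "(A + x) mod 4 = (A + y) mod 4 \<Longrightarrow> x mod 4 = (y::nat) mod 4"
  unfolding nat_mod_eq_iff by simp

lemma canc4: "x < 4 \<Longrightarrow> y < 4 \<Longrightarrow> (x + c) mod 4 = (y + c) mod 4 \<Longrightarrow> x = (y::nat)"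
  using canc[of c x y] by (simp add: add.commute)

lemma h_letter_W: "a < 4 \<Longrightarrow> h_letter a = map (\<lambda>k. (a + cc!k) mod 4) [0..<11]"
proof -
  assume "a < 4"
  then have "a = 0 \<or> a = 1 \<or> a = 2 \<or> a = 3" by auto
  then show ?thesis by (elim disjE; simp add: cc_def upt_rec)
qed

lemma h_map_W: "h (map W [0..<N]) = map W [0..<11*N]"
proof (induction N)
  case 0 then show ?case by (simp add: h_def)
next
  case (Suc N)
  have e0: "[0..<11*N + 11] = [0..<11*N] @ [11*N..<11*N+11]"
    by (rule upt_add_eq_append) simp
  have e: "[0..<11*Suc N] = [0..<11*N] @ map (\<lambda>k. k + 11*N) [0..<11]"
    using e0 by (simp add: map_add_upt add.commute)
  have "h (map W [0..<Suc N]) = h (map W [0..<N]) @ h_letter (W N)"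
    by (simp add: h_def)
  also have "h_letter (W N) = map (\<lambda>k. W (k + 11*N)) [0..<11]"
  proof -
    have "h_letter (W N) = map (\<lambda>k. (W N + cc!k) mod 4) [0..<11]" by (rule h_letter_W[OF W_lt])
    also have "\<dots> = map (\<lambda>k. W (k + 11*N)) [0..<11]"
      by (rule map_cong[OF refl]) (metis W_step add.commute atLeastLessThan_iff set_upt)
    finally show ?thesis .
  qed
  finally show ?case using Suc e by simp
qed

lemma hpow_W: "hpow n = map W [0..<11^n]"
proof (induction n)
  case 0 then show ?case by (simp add: hpow_def W0)
next
  case (Suc n)
  have "hpow (Suc n) = h (hpow n)" by (simp add: hpow_def)
  then show ?case using Suc by (simp add: h_map_W)
qed

lemma lt_pow11: "n < (11::nat)^n"
  by (induction n) auto

lemma h_omega_W: "h_omega i = W i"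
proof -
  have "i < 11 ^ Suc i" using lt_pow11[of i] by simp
  then show ?thesis by (simp add: h_omega_def hpow_W)
qed

lemma W_pal: "j < 11^n \<Longrightarrow> W (11^n - 1 - j) = W j"
proof (induction n arbitrary: j)
  case 0 then show ?case by simp
next
  case (Suc n)
  define b where "b = j div 11"
  define k where "k = j mod 11"
  have k: "k < 11" and j: "j = 11*b + k" by (auto simp: b_def k_def)
  have "j < 11^n * 11" using Suc.prems by (simp add: mult.commute)
  then have b: "b < 11^n" unfolding b_def by (rule less_mult_imp_div_less)
  obtain c where c: "11^n = Suc (b + c)" using less_iff_Suc_add[THEN iffD1, OF b] by blast
  have e0: "(11::nat)^Suc n = 11*b + 11*c + 11" using c by simp
  have e1: "11^Suc n - 1 - j = 11*c + (10-k)" using e0 j k by linarith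
  have e2: "11^n - 1 - b = c" using c by linarith
  have "W (11^Suc n - 1 - j) = (W (11^n - 1 - b) + cc!(10-k)) mod 4"
    unfolding e1 e2 by (rule W_step) simp
  also have "\<dots> = (W b + cc!k) mod 4" using Suc.IH[OF b] F5[OF k] by simp
  also have "\<dots> = W j" unfolding j by (rule W_step[OF k, symmetric])
  finally show ?case .
qed

lemma W_neq: "W (a+1) \<noteq> W a"
proof (induction a rule: less_induct)
  case (less a)
  define b where "b = a div 11"
  define k where "k = a mod 11"
  have k: "k < 11" and a: "a = 11*b + k" by (auto simp: b_def k_def)
  show ?case
  proof (cases "k < 10")
    case True
    have a1: "a+1 = 11*b + (k+1)" using a by simp
    have "W (a+1) = (W b + cc!(k+1)) mod 4" unfolding a1 by (rule W_step) (use True in simp)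
    moreover have "W a = (W b + cc!k) mod 4" unfolding a by (rule W_step[OF k])
    ultimately show ?thesis using F4[OF W_lt True] by simp
  next
    case False
    then have k10: "k = 10" using k by simp
    have c10: "cc!10 = 0" "cc!0 = 0" unfolding cc_def by simp_all
    have a10: "a = 11*b + 10" using a k10 by simp
    have a11: "a + 1 = 11*(b+1) + 0" using a10 by simp
    have wa: "W a = (W b + cc!10) mod 4" unfolding a10 by (rule W_step[of 10 b]) simp
    have wa': "W a = W b" unfolding wa c10 using W_lt[of b] by simp
    have wb: "W (a+1) = (W (b+1) + cc!0) mod 4" unfolding a11 by (rule W_step[of 0 "b+1"]) simp
    have wb': "W (a+1) = W (b+1)" unfolding wb c10 using W_lt[of "b+1"] by simp
    have "b < a" using a10 by simp
    then have "W (b+1) \<noteq> W b" by (rule less.IH)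
    then show ?thesis unfolding wa' wb' .
  qed
qed


lemma Dlem: "x < 4 \<Longrightarrow> y < 4 \<Longrightarrow> (x + (y + 4 - x) mod 4) mod 4 = (y::nat)"
proof -
  assume "x < 4" "y < 4"
  then have "x = 0 \<or> x = 1 \<or> x = 2 \<or> x = 3" "y = 0 \<or> y = 1 \<or> y = 2 \<or> y = 3" by presburger+
  then show ?thesis by (elim disjE) simp_all
qed

lemma Dnz: "x < 4 \<Longrightarrow> y < 4 \<Longrightarrow> y \<noteq> x \<Longrightarrow> (y + 4 - x) mod 4 \<in> {1,2,3::nat}"
proof -
  assume "x < 4" "y < 4" "y \<noteq> x"
  moreover have "x = 0 \<or> x = 1 \<or> x = 2 \<or> x = 3" "y = 0 \<or> y = 1 \<or> y = 2 \<or> y = 3"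
    using calculation by presburger+
  ultimately show ?thesis by (elim disjE) simp_all
qed

lemma Hrep:
  assumes n: "n < 33"
  shows "W (11*a + n) = (W a + H ((W (a+1) + 4 - W a) mod 4) ((W (a+2) + 4 - W (a+1)) mod 4) n) mod 4"
proof -
  define d1 where "d1 = (W (a+1) + 4 - W a) mod 4"
  define d2 where "d2 = (W (a+2) + 4 - W (a+1)) mod 4"
  have x1: "(W a + d1) mod 4 = W (a+1)" unfolding d1_def by (rule Dlem[OF W_lt W_lt])
  have x2: "(W (a+1) + d2) mod 4 = W (a+2)" unfolding d2_def by (rule Dlem[OF W_lt W_lt])
  have s: "W (11*a + n) = (W (a + n div 11) + cc!(n mod 11)) mod 4"
  proof -
    have "11*a + n = 11*(a + n div 11) + n mod 11" by simp
    then show ?thesis by (metis W_step mod_less_divisor zero_less_numeral)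
  qed
  consider "n < 11" | "11 \<le> n" "n < 22" | "22 \<le> n" by linarith
  then have "W (11*a + n) = (W a + H d1 d2 n) mod 4"
  proof cases
    case 1
    then have "n div 11 = 0" "n mod 11 = n" by auto
    then show ?thesis using s 1 by (simp add: H_def)
  next
    case 2
    then have nd: "n div 11 = 1" by linarith
    have "(W a + H d1 d2 n) mod 4 = ((W a + d1) + cc!(n mod 11)) mod 4"
      using 2 by (simp add: H_def add.assoc)
    also have "\<dots> = ((W a + d1) mod 4 + cc!(n mod 11)) mod 4" by (simp add: mod_add_left_eq)
    also have "\<dots> = W (11*a + n)" using s nd x1 by simp
    finally show ?thesis by simp
  next
    case 3
    then have nd: "n div 11 = 2" using n by linarith
    have "(W a + H d1 d2 n) mod 4 = ((W a + d1) + d2 + cc!(n mod 11)) mod 4"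
      using 3 by (simp add: H_def add.assoc)
    also have "\<dots> = ((W a + d1) mod 4 + d2 + cc!(n mod 11)) mod 4"
      using mod_add_left_eq[of "W a + d1" 4 "d2 + cc!(n mod 11)"] by (simp add: add.assoc)
    also have "\<dots> = (W (a+1) + d2 + cc!(n mod 11)) mod 4" using x1 by simp
    also have "\<dots> = ((W (a+1) + d2) mod 4 + cc!(n mod 11)) mod 4"
      using mod_add_left_eq[of "W (a+1) + d2" 4 "cc!(n mod 11)"] by simp
    also have "\<dots> = W (11*a + n)" using s nd x2 by simp
    finally show ?thesis by simp
  qed
  then show ?thesis unfolding d1_def d2_def .
qed

lemma nopow: "1 \<le> q \<Longrightarrow> \<forall>t<m. W (i+t) = W (i+t+q) \<Longrightarrow> 2*m \<le> q"
proof (induction q arbitrary: i m rule: less_induct)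
  case (less q)
  have per: "\<And>t. t < m \<Longrightarrow> W (i+t) = W (i+t+q)" using less.prems(2) by blast
  show ?case
  proof (rule ccontr)
    assume big: "\<not> 2*m \<le> q"
    have m1: "1 \<le> m" using big less.prems(1) by simp
    consider "q mod 11 = 0" | "q mod 11 \<noteq> 0" "6 \<le> m" | "q mod 11 \<noteq> 0" "m < 6" by linarith
    then show False
    proof cases
      case 1
      obtain q' where q': "q = 11*q'" using 1 by auto
      have q'1: "1 \<le> q'" "q' < q" using less.prems(1) q' by auto
      define B0 where "B0 = i div 11"
      define n' where "n' = (i+m-1) div 11 + 1 - B0"
      have per': "\<forall>t<n'. W (B0+t) = W (B0+t+q')"
      proof (intro allI impI)
        fix t assume t: "t < n'"
        define b where "b = B0 + t"
        define j where "j = max i (11*b)"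
        have bb: "b \<le> (i+m-1) div 11" using t unfolding n'_def b_def by linarith
        have b11: "11*b \<le> i+m-1" using bb by linarith
        have j1: "i \<le> j" "j < i+m" using b11 m1 unfolding j_def by auto
        have jdiv: "j div 11 = b"
        proof (cases "11*b \<le> i")
          case True
          then have "b \<le> i div 11" by linarith
          then have "b = i div 11" unfolding b_def B0_def by simp
          then show ?thesis using True unfolding j_def by simp
        next
          case False
          then show ?thesis unfolding j_def by simp
        qed
        have "W (i + (j-i)) = W (i + (j-i) + q)" using per[of "j-i"] j1 by simp
        then have e: "W j = W (j + q)" using j1 by simp
        have jk: "j = 11*b + j mod 11" using jdiv by (metis div_mult_mod_eq mult.commute)
        have jq: "j + q = 11*(b+q') + j mod 11" using jk q' by (simp add: algebra_simps)
        have "(W b + cc!(j mod 11)) mod 4 = (W (b+q') + cc!(j mod 11)) mod 4"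
          using e W_step[of "j mod 11" b] W_step[of "j mod 11" "b+q'"] jk jq by simp
        then show "W (B0+t) = W (B0+t+q')" using canc4[OF W_lt W_lt] unfolding b_def by blast
      qed
      have "2*n' \<le> q'" using less.IH[OF q'1(2) q'1(1) per'] .
      moreover have "m \<le> 11*n'" unfolding n'_def B0_def using m1 by linarith
      ultimately show False using big q' by linarith
    next
      case 2
      have s: "1 \<le> q mod 11" "q mod 11 < 11" using 2 by auto
      obtain t where t: "t<5" "(i mod 11+t) mod 11 \<noteq> 10" "(i mod 11+t+q mod 11) mod 11 \<noteq> 10"
        "Dk ((i mod 11+t) mod 11) \<noteq> Dk ((i mod 11+t+q mod 11) mod 11)"
        using F1[of "i mod 11" "q mod 11"] s by auto
      define j where "j = i + t"
      have k: "(i mod 11 + t) mod 11 = j mod 11" by (simp add: j_def mod_add_left_eq)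
      have k': "(i mod 11 + t + q mod 11) mod 11 = (j+q) mod 11" unfolding j_def
        by (metis mod_add_eq mod_add_left_eq mod_mod_trivial)
      have e1: "W j = W (j+q)" using per[of t] t(1) 2 unfolding j_def by simp
      have e2: "W (j+1) = W (j+1+q)" using per[of "t+1"] t(1) 2 unfolding j_def by (simp add: algebra_simps)
      define b where "b = j div 11"
      define b' where "b' = (j+q) div 11"
      have kk: "j mod 11 < 10" using t(2) k by (metis mod_less_divisor less_Suc_eq numeral_eq_Suc pred_numeral_simps zero_less_numeral Suc_eq_plus1 add_Suc_right numeral_One linorder_neqE_nat not_less_eq)
      have kk': "(j+q) mod 11 < 10" using t(3) k' by (metis mod_less_divisor less_Suc_eq numeral_eq_Suc pred_numeral_simps zero_less_numeral Suc_eq_plus1 add_Suc_right numeral_One linorder_neqE_nat not_less_eq)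
      have j0: "j = 11*b + j mod 11" unfolding b_def by simp
      have j0': "j+q = 11*b' + (j+q) mod 11" unfolding b'_def by simp
      have wj: "W j = (W b + cc!(j mod 11)) mod 4" using W_step[of "j mod 11" b] j0 by simp
      have wjq: "W (j+q) = (W b' + cc!((j+q) mod 11)) mod 4" using W_step[of "(j+q) mod 11" b'] j0' by simp
      have wj1: "W (j+1) = (W b + cc!(j mod 11 + 1)) mod 4"
        using W_step[of "j mod 11 + 1" b] j0 kk by (metis add.assoc add_less_cancel_right one_plus_numeral semiring_norm(5) less_trans_Suc Suc_eq_plus1 numeral_plus_one)
      have wj1q: "W (j+1+q) = (W b' + cc!((j+q) mod 11 + 1)) mod 4"
        using W_step[of "(j+q) mod 11 + 1" b'] j0' kk' by (metis add.assoc add.commute add_less_cancel_right one_plus_numeral semiring_norm(5) less_trans_Suc Suc_eq_plus1 numeral_plus_one)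
      have A1: "(W b + cc!(j mod 11)) mod 4 = (W b' + cc!((j+q) mod 11)) mod 4"
        using e1 unfolding wj wjq .
      have A2: "(W b + cc!(j mod 11 + 1)) mod 4 = (W b' + cc!((j+q) mod 11 + 1)) mod 4"
        using e2 unfolding wj1 wj1q .
      have "Dk (j mod 11) = Dk ((j+q) mod 11)" by (rule F2[OF W_lt W_lt kk kk' A1 A2])
      then show False using t(4) k k' by simp
    next
      case 3
      have q9: "q \<le> 9" using 3 big by linarith
      define a where "a = i div 11"
      define r where "r = i mod 11"
      define d1 where "d1 = (W (a+1) + 4 - W a) mod 4"
      define d2 where "d2 = (W (a+2) + 4 - W (a+1)) mod 4"
      have d1: "d1 \<in> {1,2,3}" unfolding d1_def by (rule Dnz[OF W_lt W_lt W_neq])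
      have "W (a+1+1) \<noteq> W (a+1)" by (rule W_neq)
      then have "W (a+2) \<noteq> W (a+1)" by (simp add: add.assoc)
      then have d2: "d2 \<in> {1,2,3}" unfolding d2_def by (rule Dnz[OF W_lt W_lt])
      have r: "r < 11" unfolding r_def by simp
      obtain t where t: "t < q div 2 + 1" "H d1 d2 (r+t) mod 4 \<noteq> H d1 d2 (r+t+q) mod 4"
        using F3[OF d1 d2 r less.prems(1) q9] by blast
      have tm: "t < m" using t(1) big by linarith
      have i: "i = 11*a + r" unfolding a_def r_def by simp
      have "W (11*a + (r+t)) = W (11*a + (r+t+q))" using per[OF tm] i by (simp add: algebra_simps)
      then have "(W a + H d1 d2 (r+t)) mod 4 = (W a + H d1 d2 (r+t+q)) mod 4"
        using Hrep[of "r+t" a] Hrep[of "r+t+q" a] r t(1) q9 unfolding d1_def d2_def by simp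
      then show False using canc t(2) by blast
    qed
  qed
qed


lemma window: assumes "is_power (map W [i..<i+p]) p q" shows "2*p \<le> 3*q"
proof -
  have pq: "q < p" "1 \<le> q" and hp: "has_period (map W [i..<i+p]) q"
    using assms by (auto simp: is_power_def)
  have "\<forall>t<p-q. W (i+t) = W (i+t+q)"
  proof (intro allI impI)
    fix t assume t: "t < p-q"
    then have "t + q < length (map W [i..<i+p])" by simp
    then have "map W [i..<i+p] ! t = map W [i..<i+p] ! (t+q)" using hp by (simp add: has_period_def)
    then show "W (i+t) = W (i+t+q)" using t by (simp add: add.assoc)
  qed
  then have "2*(p-q) \<le> q" using nopow pq by blast
  then show "2*p \<le> 3*q" using pq by linarith
qed

lemma sublist_window:
  assumes "sublist v (map W [0..<N])"
  shows "\<exists>i. v = map W [i..<i + length v]"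
proof -
  obtain ps ss where e: "map W [0..<N] = ps @ v @ ss" using assms by (auto simp: sublist_def)
  have le: "length ps + length v \<le> N" using arg_cong[OF e, of length] by simp
  have "v = take (length v) (drop (length ps) (map W [0..<N]))" using e by simp
  also have "\<dots> = map W [length ps..<length ps + length v]"
    using le by (simp add: take_map drop_map)
  finally show ?thesis by blast
qed

lemma W1: "W 1 = 1"
proof -
  have "W (11*0+1) = (W 0 + cc!1) mod 4" by (rule W_step) simp
  also have "\<dots> = 1" by (simp add: W0 cc_def)
  finally show ?thesis by simp
qed

lemma W2: "W 2 = 3"
proof -
  have "W (11*0+2) = (W 0 + cc!2) mod 4" by (rule W_step) simp
  also have "\<dots> = 3" by (simp add: W0 cc_def)
  finally show ?thesis by (simp add: numeral_2_eq_2)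
qed

lemma W3: "W 3 = 1"
proof -
  have "W (11*0+3) = (W 0 + cc!3) mod 4" by (rule W_step) simp
  also have "\<dots> = 1" by (simp add: W0 cc_def)
  finally show ?thesis by simp
qed

theorem mainTheorem8:
  shows "(\<forall>a \<in> {0,1,2,3::nat}. rev (h_letter a) = h_letter a)
       \<and> (\<forall>i p q. is_power (map h_omega [i..<i+p]) p q \<longrightarrow> real p / real q \<le> 3/2)
       \<and> (\<forall>n \<ge> 1. rev (hpow n) = hpow n \<and> length (hpow n) = 11 ^ n
                  \<and> crit_exp (hpow n) = 3/2)"
proof -
  have hw: "h_omega = W" by (rule ext) (rule h_omega_W)
  have P1: "\<forall>a \<in> {0,1,2,3::nat}. rev (h_letter a) = h_letter a" by simp
  have rat: "\<And>p q. 2*p \<le> 3*q \<Longrightarrow> 1 \<le> q \<Longrightarrow> real p / real q \<le> 3/2"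
  proof -
    fix p q :: nat assume a: "2*p \<le> 3*q" "1 \<le> q"
    then have "real (2*p) \<le> real (3*q)" by linarith
    then have "2 * real p \<le> 3 * real q" by simp
    then show "real p / real q \<le> 3/2" using a(2) by (simp add: divide_le_eq)
  qed
  have P2: "\<forall>i p q. is_power (map h_omega [i..<i+p]) p q \<longrightarrow> real p / real q \<le> 3/2"
  proof (intro allI impI)
    fix i p q assume "is_power (map h_omega [i..<i+p]) p q"
    then have ip: "is_power (map W [i..<i+p]) p q" by (simp add: hw)
    then show "real p / real q \<le> 3/2" using window[OF ip] rat by (auto simp: is_power_def)
  qed
  have P3: "\<forall>n \<ge> 1. rev (hpow n) = hpow n \<and> length (hpow n) = 11 ^ n \<and> crit_exp (hpow n) = 3/2"
  proof (intro allI impI conjI)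
    fix n :: nat assume n: "1 \<le> n"
    show len: "length (hpow n) = 11^n" by (simp add: hpow_W)
    show "rev (hpow n) = hpow n"
    proof (rule nth_equalityI)
      show "length (rev (hpow n)) = length (hpow n)" by simp
      fix j assume j: "j < length (rev (hpow n))"
      then have j': "j < 11^n" by (simp add: hpow_W)
      have "rev (hpow n) ! j = W (11^n - Suc j)" using j' by (simp add: hpow_W rev_nth)
      also have "\<dots> = W j" using W_pal[OF j'] by simp
      finally show "rev (hpow n) ! j = hpow n ! j" using j' by (simp add: hpow_W)
    qed
    define S where "S = {real p / real q | v p q. sublist v (hpow n) \<and> v \<noteq> [] \<and> is_power v p q}"
    define N where "N = (11::nat)^n"
    have N: "11 \<le> N" unfolding N_def using n
      by (metis power_increasing power_one_right zero_less_numeral one_le_numeral)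
    have hN: "hpow n = map W [0..<N]" by (simp add: hpow_W N_def)
    have le: "\<And>x. x \<in> S \<Longrightarrow> x \<le> 3/2"
    proof -
      fix x assume "x \<in> S"
      then obtain v p q where x: "x = real p / real q" and v: "sublist v (hpow n)" "is_power v p q"
        unfolding S_def by blast
      obtain i where vi: "v = map W [i..<i + length v]" using sublist_window v(1) hN by metis
      have lv: "length v = p" using v(2) by (simp add: is_power_def)
      have "is_power (map W [i..<i+p]) p q" using v(2) vi lv by metis
      then show "x \<le> 3/2" using window rat x v(2) by (auto simp: is_power_def)
    qed
    have mem: "3/2 \<in> S"
    proof -
      have u1: "[0..<N] = [0..<4] @ [4..<N]" using upt_add_eq_append[of 0 4 "N-4"] N by simp
      have u2: "[0..<4] = [0,1,2,3::nat]" by (simp add: upt_rec)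
      have "hpow n = [W 0] @ [W 1, W 2, W 3] @ map W [4..<N]"
        unfolding hN u1 u2 by simp
      then have "hpow n = [W 0] @ [1,3,1] @ map W [4..<N]" unfolding W1 W2 W3 .
      then have sl: "sublist [1,3,1] (hpow n)" by (metis sublist_appendI)
      have ip: "is_power [1,3,1::nat] 3 2"
        by (auto simp: is_power_def has_period_def)
      have "real 3 / real 2 = (3/2::real)" by simp
      then show ?thesis unfolding S_def using sl ip by force
    qed
    have fin: "finite S"
    proof (rule finite_subset)
      show "S \<subseteq> (\<lambda>(p,q). real p / real q) ` ({0..N} \<times> {0..N})"
      proof
        fix x assume "x \<in> S"
        then obtain v p q where x: "x = real p / real q" and v: "sublist v (hpow n)" "is_power v p q"
          unfolding S_def by blast
        have "length v \<le> N" using sublist_length_le[OF v(1)] hN by simp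
        then have "p \<le> N" "q \<le> N" using v(2) by (auto simp: is_power_def)
        then show "x \<in> (\<lambda>(p,q). real p / real q) ` ({0..N} \<times> {0..N})" using x by force
      qed
      show "finite ((\<lambda>(p,q). real p / real q) ` ({0..N} \<times> {0..N}))" by simp
    qed
    have "Max S = 3/2" by (rule Max_eqI[OF fin le mem])
    then show "crit_exp (hpow n) = 3/2" unfolding crit_exp_def S_def by simp
  qed
  show ?thesis using P1 P2 P3 by blast
qed

end
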